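(* Fix $\lambda\in[0,1)$ and $p\in(0,1]$. Let $\mathbf{v}^0\in\overline{\mathcal{V}}^\infty$ and let $\mathbf{v}(\mathbf{v}^0,\cdot)$ be the unique solution to the fluid model with initial condition $\mathbf{v}^0$. Then $\sup\{i:\mathbf{v}_i(\mathbf{v}^0,t)>0\}<\infty$ for all $t>0$.
   Context: $\mathcal{S}=\{\mathbf{s}\in[0,1]^{\mathbb{Z}_+}:1=\mathbf{s}_0\ge\mathbf{s}_1\ge\cdots\ge0\}$, $\overline{\mathcal{S}}^\infty=\{\mathbf{s}\in\mathcal{S}:\sum_{i\ge1}\mathbf{s}_i<\infty\}$, $\overline{\mathcal{V}}^\infty=\{\mathbf{v}:\mathbf{v}_i=\sum_{j\ge i}\mathbf{s}_j\ \forall i,\text{ for some }\mathbf{s}\in\overline{\mathcal{S}}^\infty\}$. $g_i(\mathbf{v})=p$ if $\mathbf{v}_i>0$, $=\min\{\lambda\mathbf{v}_{i-1},p\}$ if $\mathbf{v}_i=0<\mathbf{v}_{i-1}$, $=0$ if $\mathbf{v}_i=\mathbf{v}_{i-1}=0$. A solution to the fluid model with initial condition $\mathbf{v}^0$ is $\mathbf{v}:[0,\infty)\to\overline{\mathcal{V}}^\infty$ with (0) all coordinates $L$-Lipschitz for a common $L$; (1) $\mathbf{v}(0)=\mathbf{v}^0$; (2) for all $t$, $\mathbf{v}_0-\mathbf{v}_1=1$ and $1\ge\mathbf{v}_i-\mathbf{v}_{i+1}\ge\mathbf{v}_{i+1}-\mathbf{v}_{i+2}\ge0$, $i\ge0$;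 (3) for a.e. $t$ and all $i\ge1$, $\dot{\mathbf{v}}_i=\lambda(\mathbf{v}_{i-1}-\mathbf{v}_i)-(1-p)(\mathbf{v}_i-\mathbf{v}_{i+1})-g_i(\mathbf{v})$. It exists and is unique. *)

theory Defs
  imports "HOL-Analysis.Analysis"
begin

definition S_set :: "(nat \<Rightarrow> real) set" where
  "S_set = {s. (\<forall>i. s i \<in> {0..1}) \<and> s 0 = 1 \<and> (\<forall>i. s (Suc i) \<le> s i)}"

definition S_bar_inf :: "(nat \<Rightarrow> real) set" where
  "S_bar_inf = {s \<in> S_set. summable (\<lambda>i. s (Suc i))}"

definition V_bar_inf :: "(nat \<Rightarrow> real) set" where
  "V_bar_inf = {v. \<exists>s\<in>S_bar_inf. \<forall>i. v i = (\<Sum>j. s (j + i))}"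

text \<open>The function g_i(v), meaningful for i \<ge> 1.\<close>
definition g_fun :: "real \<Rightarrow> real \<Rightarrow> nat \<Rightarrow> (nat \<Rightarrow> real) \<Rightarrow> real" where
  "g_fun lam p i v =
     (if v i > 0 then p
      else if v i = 0 \<and> 0 < v (i - 1) then min (lam * v (i - 1)) p
      else 0)"

definition fluid_solution ::
  "real \<Rightarrow> real \<Rightarrow> (nat \<Rightarrow> real) \<Rightarrow> (real \<Rightarrow> nat \<Rightarrow> real) \<Rightarrow> bool" where
  "fluid_solution lam p v0 v \<longleftrightarrow>
     (\<forall>t\<ge>0. v t \<in> V_bar_inf) \<and>
     (\<exists>L. \<forall>i. L-lipschitz_on {0..} (\<lambda>t. v t i)) \<and>
     v 0 = v0 \<and>
     (\<forall>t\<ge>0. v t 0 - v t 1 = 1 \<and>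
        (\<forall>i. 1 \<ge> v t i - v t (i + 1) \<and>
             v t i - v t (i + 1) \<ge> v t (i + 1) - v t (i + 2) \<and>
             v t (i + 1) - v t (i + 2) \<ge> 0)) \<and>
     (AE t in lborel. t \<ge> 0 \<longrightarrow>
        (\<forall>i\<ge>1. ((\<lambda>s. v s i) has_real_derivative
            (lam * (v t (i - 1) - v t i) - (1 - p) * (v t i - v t (i + 1)) - g_fun lam p i (v t)))
            (at t)))"

end

theory Submission
  imports Defs
begin


lemma right_local_decr:
  fixes h :: "real \<Rightarrow> real"
  assumes ab: "a \<le> b"
  and R: "\<And>x. a \<le> x \<Longrightarrow> x < b \<Longrightarrow> \<exists>r>0. \<forall>y. x < y \<and> y < x + r \<and> y \<le> b \<longrightarrow> h y \<le> h x"
  and Lf: "\<And>x e. a < x \<Longrightarrow> x \<le> b \<Longrightarrow> e > 0 \<Longrightarrow> \<exists>r>0. \<forall>y. x - r < y \<and> y < x \<and> a \<le> y \<longrightarrow> h x \<le> h y + e"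
  shows "h b \<le> h a"
proof -
  define T where "T = {x. a \<le> x \<and> x \<le> b \<and> (\<forall>y. a \<le> y \<and> y \<le> x \<longrightarrow> h y \<le> h a)}"
  define c where "c = Sup T"
  have aT: "a \<in> T" using ab by (auto simp: T_def)
  have bdd: "bdd_above T" by (auto simp: T_def bdd_above_def)
  have ac: "a \<le> c" unfolding c_def using aT bdd by (rule cSup_upper)
  have cb: "c \<le> b" unfolding c_def using aT by (intro cSup_least) (auto simp: T_def)
  have below: "h y \<le> h a" if y1: "a \<le> y" and y2: "y < c" for y
  proof -
    obtain x where "x \<in> T" "y < x" using y2 less_cSup_iff[OF _ bdd, of y] aT unfolding c_def by auto
    then show ?thesis using y1 by (auto simp: T_def)
  qed
  have hc: "h c \<le> h a"
  proof (cases "c = a")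
    case True then show ?thesis by simp
  next
    case False
    hence ac': "a < c" using ac by simp
    show ?thesis
    proof (rule field_le_epsilon)
      fix e :: real assume e: "0 < e"
      obtain r where r: "r > 0" "\<forall>y. c - r < y \<and> y < c \<and> a \<le> y \<longrightarrow> h c \<le> h y + e"
        using Lf[OF ac' cb e] by blast
      define y where "y = max a (c - r/2)"
      have "c - r < y" "y < c" "a \<le> y" using r ac' by (auto simp: y_def)
      then have "h c \<le> h y + e" using r by blast
      moreover have "h y \<le> h a" using below \<open>y < c\<close> \<open>a \<le> y\<close> by blast
      ultimately show "h c \<le> h a + e" by simp
    qed
  qed
  have cT: "c \<in> T" using below hc ac cb by (auto simp: T_def) (metis order_le_less)
  have "c = b"
  proof (rule ccontr)
    assume "c \<noteq> b"
    hence cb': "c < b" using cb by simp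
    obtain r where r: "r > 0" "\<forall>y. c < y \<and> y < c + r \<and> y \<le> b \<longrightarrow> h y \<le> h c"
      using R[OF ac cb'] by blast
    define y0 where "y0 = min b (c + r/2)"
    have "y0 \<in> T" unfolding T_def
    proof (safe)
      show "a \<le> y0" "y0 \<le> b" using ac cb' r by (auto simp: y0_def)
      fix y assume "a \<le> y" "y \<le> y0"
      show "h y \<le> h a"
      proof (cases "y \<le> c")
        case True then show ?thesis using cT \<open>a \<le> y\<close> by (auto simp: T_def)
      next
        case False
        then have "h y \<le> h c" using r \<open>y \<le> y0\<close> by (auto simp: y0_def)
        then show ?thesis using hc by simp
      qed
    qed
    hence "y0 \<le> c" unfolding c_def using bdd by (rule cSup_upper)
    moreover have "c < y0" using cb' r by (auto simp: y0_def)
    ultimately show False by simp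
  qed
  then show ?thesis using hc by simp
qed



lemma open_small:
  fixes N :: "real set"
  assumes "N \<in> null_sets lborel" "e > 0"
  obtains T where "open T" "N \<subseteq> T" "T \<in> lmeasurable" "measure lebesgue T \<le> e"
proof -
  have Nl: "N \<in> null_sets lebesgue" using assms(1) by (rule null_sets_completionI)
  then have "N \<in> sets lebesgue" by auto
  then obtain T where T: "open T" "N \<subseteq> T" "(T - N) \<in> lmeasurable" "emeasure lebesgue (T - N) < ennreal e"
    using sets_lebesgue_outer_open assms(2) by metis
  have TN: "T = (T - N) \<union> N" using T(2) by auto
  have Tm: "T \<in> lmeasurable"
  proof (rule lmeasurable_negligible_symdiff[OF T(3)])
    have "sym_diff (T - N) T \<subseteq> N" by auto
    then show "negligible (sym_diff (T - N) T)"
      using Nl negligible_iff_null_sets negligible_subset by blast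
  qed
  have "measure lebesgue T = measure lebesgue (T - N)"
    using measure_Un_null_set[of "T - N" lebesgue N] T(3) Nl TN by auto
  also have "\<dots> \<le> e"
  proof -
    have "ennreal (measure lebesgue (T - N)) < ennreal e"
      using T(3,4) by (simp add: emeasure_eq_measure2)
    then show ?thesis by (simp add: ennreal_less_iff)
  qed
  finally show ?thesis using that T Tm by blast
qed



lemma lip_deriv_le:
  fixes f :: "real \<Rightarrow> real"
  assumes ab: "a \<le> b" and lip: "L-lipschitz_on {a..b} f" and N: "N \<in> null_sets lborel"
    and der: "\<And>s. a < s \<Longrightarrow> s < b \<Longrightarrow> s \<notin> N \<Longrightarrow> \<exists>D\<le>0. (f has_real_derivative D) (at s)"
  shows "f b \<le> f a"
proof -
  have L0: "0 \<le> L" using lip by (rule lipschitz_on_nonneg)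
  have flip: "f y - f x \<le> L * (y - x)" if "a \<le> x" "x \<le> y" "y \<le> b" for x y
    using lipschitz_onD[OF lip, of y x] that by (auto simp: dist_real_def)
  have key: "f b \<le> f a + e * (b - a + L)" if e: "e > 0" for e
  proof -
    have N': "insert a N \<in> null_sets lborel" using N
      by (metis insert_is_Un null_sets.Un countable_imp_null_set_lborel countable_finite finite.intros)
    obtain T where T: "open T" "insert a N \<subseteq> T" "T \<in> lmeasurable" "measure lebesgue T \<le> e"
      using open_small[OF N' e] by blast
    define \<phi> where "\<phi> s = measure lebesgue (T \<inter> {a..s})" for s
    have Tint: "T \<inter> {a..s} \<in> lmeasurable" for s
      by (rule fmeasurable_Int_fmeasurable[OF T(3)]) auto
    have phimono: "\<phi> x \<le> \<phi> y" if "x \<le> y" for x y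
      unfolding \<phi>_def using that Tint by (intro measure_mono_fmeasurable[OF _ _ Tint]) auto
    have phi0: "0 \<le> \<phi> a" by (simp add: \<phi>_def)
    have phib: "\<phi> b \<le> e" unfolding \<phi>_def
      using measure_mono_fmeasurable[of "T \<inter> {a..b}" T lebesgue] T by auto
    have phiinc: "\<phi> x + (y - x) \<le> \<phi> y" if "x \<le> y" "{x<..y} \<subseteq> T" "a \<le> x" for x y
    proof -
      have ivl: "{x<..y} \<in> lmeasurable" by (intro measurable_convex) auto
      have mi: "measure lebesgue {x<..y} = y - x"
        using measure_completion[of "{x<..y}" lborel] measure_lborel_Ioc[OF that(1)] by simp
      have e0: "T \<inter> {a..x} \<inter> {x<..y} = {}" by auto
      have "measure lebesgue ((T \<inter> {a..x}) \<union> {x<..y}) = \<phi> x + (y - x)"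
        using measure_Un3[OF Tint ivl, of x] mi unfolding e0 by (simp add: \<phi>_def)
      moreover have "(T \<inter> {a..x}) \<union> {x<..y} \<subseteq> T \<inter> {a..y}" using that by auto
      moreover have "(T \<inter> {a..x}) \<union> {x<..y} \<in> sets lebesgue" using Tint ivl by auto
      ultimately show ?thesis
        using measure_mono_fmeasurable[OF _ _ Tint] unfolding \<phi>_def by metis
    qed
    define h where "h s = f s - e * s - L * \<phi> s" for s
    have "h b \<le> h a"
    proof (rule right_local_decr[OF ab])
      fix x assume ax: "a \<le> x" and xb: "x < b"
      show "\<exists>r>0. \<forall>y. x < y \<and> y < x + r \<and> y \<le> b \<longrightarrow> h y \<le> h x"
      proof (cases "x \<in> T")
        case True
        then obtain r where r: "r > 0" "ball x r \<subseteq> T" using T(1) open_contains_ball by blast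
        show ?thesis
        proof (intro exI[of _ r] conjI allI impI)
          fix y assume y: "x < y \<and> y < x + r \<and> y \<le> b"
          have "{x<..y} \<subseteq> T" using r y by (auto simp: dist_real_def subset_eq)
          then have p: "\<phi> x + (y - x) \<le> \<phi> y" using phiinc y ax by auto
          have "f y - f x \<le> L * (y - x)" using flip ax y by auto
          also have "\<dots> \<le> L * (\<phi> y - \<phi> x)" using p L0 by (intro mult_left_mono) auto
          moreover have "e * x \<le> e * y" using y e by simp
          ultimately show "h y \<le> h x" unfolding h_def by (simp add: algebra_simps)
        qed (use r in auto)
      next
        case False
        then have xa: "a < x" "x \<notin> N" using T(2) ax by (auto simp: order_le_less)
        obtain D where D: "D \<le> 0" "(f has_real_derivative D) (at x)" using der[OF xa(1) xb xa(2)] by blast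
        obtain s where s: "s > 0" "\<forall>z. z \<noteq> 0 \<and> norm (z - 0) < s \<longrightarrow> norm ((f (x + z) - f x) / z - D) < e"
          using LIM_D[OF DERIV_D[OF D(2)] e] by blast
        show ?thesis
        proof (intro exI[of _ s] conjI allI impI)
          fix y assume y: "x < y \<and> y < x + s \<and> y \<le> b"
          have "\<bar>(f (x + (y - x)) - f x) / (y - x) - D\<bar> < e" using s(2)[rule_format, of "y - x"] y by auto
          then have "(f y - f x) / (y - x) < e" using D(1) by auto
          then have "f y - f x < e * (y - x)" using y by (simp add: divide_less_eq)
          moreover have "\<phi> x \<le> \<phi> y" using phimono y by auto
          ultimately show "h y \<le> h x" using L0 unfolding h_def
            by (smt (verit, ccfv_SIG) mult_left_mono right_diff_distrib)
        qed (use s in auto)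
      qed
    next
      fix x e' :: real assume ax: "a < x" and xb: "x \<le> b" and e': "e' > 0"
      show "\<exists>r>0. \<forall>y. x - r < y \<and> y < x \<and> a \<le> y \<longrightarrow> h x \<le> h y + e'"
      proof (intro exI[of _ "e' / (L + 1)"] conjI allI impI)
        show "e' / (L + 1) > 0" using e' L0 by auto
        fix y assume y: "x - e' / (L + 1) < y \<and> y < x \<and> a \<le> y"
        have "f x - f y \<le> L * (x - y)" using flip y xb by auto
        also have "\<dots> \<le> L * (e' / (L + 1))" using y L0 by (intro mult_left_mono) auto
        also have "\<dots> \<le> e'" using L0 e' by (simp add: field_simps)
        finally have 1: "f x - f y \<le> e'" .
        have "\<phi> y \<le> \<phi> x" using phimono y by auto
        then have "L * \<phi> y \<le> L * \<phi> x" using L0 by (intro mult_left_mono)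
        then show "h x \<le> h y + e'" using 1 y e unfolding h_def
          by (smt (verit) mult_left_mono)
      qed
    qed
    then have "f b \<le> f a + e * (b - a) + L * (\<phi> b - \<phi> a)" unfolding h_def by (simp add: algebra_simps)
    also have "L * (\<phi> b - \<phi> a) \<le> L * e" using phi0 phib L0 by (intro mult_left_mono) auto
    finally show ?thesis by (simp add: algebra_simps)
  qed
  show ?thesis
  proof (rule ccontr)
    assume "\<not> f b \<le> f a"
    define e where "e = (f b - f a) / (2 * (b - a + L + 1))"
    have K: "b - a + L + 1 > 0" using ab L0 by auto
    have e0: "e > 0" using \<open>\<not> f b \<le> f a\<close> K by (simp add: e_def)
    have "e * (b - a + L) < f b - f a"
    proof -
      have "e * (b - a + L) \<le> e * (b - a + L + 1)" using e0 by simp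
      also have "\<dots> = (f b - f a) / 2" using K unfolding e_def by (simp add: field_simps)
      finally show ?thesis using \<open>\<not> f b \<le> f a\<close> by simp
    qed
    then show False using key[OF e0] by simp
  qed
qed



theorem proposition3:
  fixes lam p :: real and v0 :: "nat \<Rightarrow> real" and v :: "real \<Rightarrow> nat \<Rightarrow> real"
  assumes "0 \<le> lam" and "lam < 1" and "0 < p" and "p \<le> 1"
    and "v0 \<in> V_bar_inf"
    and "fluid_solution lam p v0 v"
  shows "\<forall>t>0. bdd_above {i. v t i > 0}"
proof -
  note fs = assms(6)[unfolded fluid_solution_def]
  have Vt: "\<And>t. t \<ge> 0 \<Longrightarrow> v t \<in> V_bar_inf" using fs by blast
  obtain L where Lip: "\<And>i. L-lipschitz_on {0..} (\<lambda>t. v t i)" using fs by blast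
  have v00: "v 0 = v0" using fs by blast
  have struct: "\<And>t. t \<ge> 0 \<Longrightarrow> v t 0 - v t 1 = 1 \<and> (\<forall>i. 1 \<ge> v t i - v t (i + 1) \<and>
             v t i - v t (i + 1) \<ge> v t (i + 1) - v t (i + 2) \<and>
             v t (i + 1) - v t (i + 2) \<ge> 0)" using fs by blast
  have AEd: "AE t in lborel. t \<ge> 0 \<longrightarrow>
        (\<forall>i\<ge>1. ((\<lambda>s. v s i) has_real_derivative
            (lam * (v t (i - 1) - v t i) - (1 - p) * (v t i - v t (i + 1)) - g_fun lam p i (v t)))
            (at t))" using fs by blast
  have L0: "0 \<le> L" using Lip[of 0] by (rule lipschitz_on_nonneg)
  have Vnonneg: "0 \<le> w i" if wV: "w \<in> V_bar_inf" for w i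
  proof -
    obtain s where s: "s \<in> S_bar_inf" "\<forall>i. w i = (\<Sum>j. s (j + i))" using wV unfolding V_bar_inf_def by blast
    have "summable (\<lambda>i. s (Suc i))" "\<forall>i. s i \<in> {0..1}" using s(1) unfolding S_bar_inf_def S_set_def by auto
    then have "summable s" "\<forall>i. 0 \<le> s i" using summable_Suc_iff by auto
    then have "summable (\<lambda>j. s (j + i))" "\<forall>j. 0 \<le> s (j + i)" using summable_iff_shift by auto
    then show ?thesis using s(2) by (simp add: suminf_nonneg)
  qed
  have vnn: "0 \<le> v t i" if "t \<ge> 0" for t i using Vnonneg[OF Vt[OF that]] .
  have diffnn: "0 \<le> v t i - v t (i + 1)" if "t \<ge> 0" for t i
  proof (cases i)
    case 0 then show ?thesis using struct[OF that] by simp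
  next
    case (Suc k) then show ?thesis using struct[OF that] by (auto simp: numeral_2_eq_2)
  qed
  have v0lim: "v0 \<longlonglongrightarrow> 0"
  proof -
    obtain s where s: "s \<in> S_bar_inf" "\<forall>i. v0 i = (\<Sum>j. s (j + i))" using assms(5) unfolding V_bar_inf_def by blast
    have "summable (\<lambda>i. s (Suc i))" using s(1) unfolding S_bar_inf_def by auto
    then have sm: "summable s" using summable_Suc_iff by auto
    have "v0 = (\<lambda>i. suminf s - sum s {..<i})" using s(2) suminf_minus_initial_segment[OF sm] by auto
    moreover have "(\<lambda>i. suminf s - sum s {..<i}) \<longlonglongrightarrow> suminf s - suminf s"
      by (intro tendsto_intros summable_LIMSEQ[OF sm])
    ultimately show ?thesis by simp
  qed
  obtain N where N1: "{x \<in> space lborel. \<not> (x \<ge> 0 \<longrightarrow>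
        (\<forall>i\<ge>1. ((\<lambda>s. v s i) has_real_derivative
            (lam * (v x (i - 1) - v x i) - (1 - p) * (v x i - v x (i + 1)) - g_fun lam p i (v x)))
            (at x)))} \<subseteq> N" and N2: "emeasure lborel N = 0" and N3: "N \<in> sets lborel"
    using AE_E[OF AEd] by blast
  have Nnull: "N \<in> null_sets lborel" using N2 N3 by auto
  have derN: "((\<lambda>s. v s i) has_real_derivative
            (lam * (v x (i - 1) - v x i) - (1 - p) * (v x i - v x (i + 1)) - g_fun lam p i (v x)))
            (at x)" if "x \<notin> N" "x \<ge> 0" "i \<ge> 1" for x i
    using N1 that by auto
  have lipd: "\<bar>v x i - v y i\<bar> \<le> L * \<bar>x - y\<bar>" if "x \<ge> 0" "y \<ge> 0" for x y i
    using lipschitz_onD[OF Lip[of i], of x y] that by (auto simp: dist_real_def)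
  have cont: "continuous_on {0..} (\<lambda>t. v t i)" for i
    using Lip[of i] by (rule lipschitz_on_continuous_on)
  have step: "v (a + \<delta>) i = 0"
    if a0: "a \<ge> 0" and d0: "\<delta> > 0" and Ld: "L * \<delta> \<le> p / 4" and i1: "i \<ge> 1"
      and h1: "v a (i - 1) \<le> p / 4" and h2: "v a i < p * \<delta> / 2" for a \<delta> i
  proof (rule ccontr)
    assume "v (a + \<delta>) i \<noteq> 0"
    then have pos: "v (a + \<delta>) i > 0" using vnn[of "a + \<delta>" i] a0 d0 by auto
    define W where "W = {s \<in> {a..a+\<delta>}. (\<lambda>t. v t i) s = 0}"
    have clW: "closed W" unfolding W_def
      by (rule continuous_closed_preimage_constant)
         (use continuous_on_subset[OF cont[of i], of "{a..a+\<delta>}"] a0 in auto)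
    have bW: "bdd_above W" by (auto simp: W_def bdd_above_def)
    define c where "c = (if W = {} then a else Sup W)"
    have cW: "W \<noteq> {} \<Longrightarrow> c \<in> W" unfolding c_def using closed_contains_Sup[OF _ bW clW] by auto
    have acc: "a \<le> c \<and> c \<le> a + \<delta>"
    proof (cases "W = {}")
      case True then show ?thesis using d0 by (auto simp: c_def)
    next
      case False then show ?thesis using cW[OF False] by (auto simp: W_def)
    qed
    then have ac: "a \<le> c" "c \<le> a + \<delta>" by auto
    have vc: "v c i \<le> v a i"
    proof (cases "W = {}")
      case True then show ?thesis by (simp add: c_def)
    next
      case False then have "v c i = 0" using cW[OF False] by (simp add: W_def)
      then show ?thesis using vnn[OF a0, of i] by simp
    qed
    have posafter: "v s i > 0" if "c < s" "s \<le> a + \<delta>" for s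
    proof -
      have "s \<notin> W"
      proof (cases "W = {}")
        case False
        then show ?thesis using that cSup_upper[OF _ bW, of s] by (auto simp: c_def)
      qed simp
      moreover have "s \<in> {a..a+\<delta>}" using that ac by auto
      ultimately have "v s i \<noteq> 0" unfolding W_def by blast
      then show ?thesis using vnn[of s i] a0 ac that by linarith
    qed
    define f where "f s = v s i + (p / 2) * s" for s
    have "f (a + \<delta>) \<le> f c"
    proof (rule lip_deriv_le[OF ac(2) _ Nnull])
      have "L-lipschitz_on {c..a+\<delta>} (\<lambda>t. v t i)"
        using Lip[of i] by (rule lipschitz_on_subset) (use ac a0 in auto)
      moreover have "((p/2) * 1)-lipschitz_on {c..a+\<delta>} (\<lambda>s. (p/2) * s)"
        using assms(3) by (intro lipschitz_on_cmult_real_nonneg lipschitz_on_id) auto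
      ultimately have "(L + (p/2) * 1)-lipschitz_on {c..a + \<delta>} (\<lambda>x. v x i + (p/2) * x)"
        by (rule lipschitz_on_add)
      moreover have "f = (\<lambda>x. v x i + (p/2) * x)" by (rule ext) (simp add: f_def)
      ultimately show "(L + p/2)-lipschitz_on {c..a + \<delta>} f" by simp

    next
      fix s assume cs: "c < s" and sb: "s < a + \<delta>" and sN: "s \<notin> N"
      have s0: "s \<ge> 0" using cs ac a0 by auto
      have vsp: "v s i > 0" using posafter cs sb by auto
      have g: "g_fun lam p i (v s) = p" using vsp by (simp add: g_fun_def)
      define D0 where "D0 = lam * (v s (i - 1) - v s i) - (1 - p) * (v s i - v s (i + 1)) - g_fun lam p i (v s)"
      have dv: "((\<lambda>s. v s i) has_real_derivative D0) (at s)" using derN[OF sN s0 i1] by (simp add: D0_def)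
      have "v s (i - 1) - v a (i - 1) \<le> L * \<bar>s - a\<bar>" using lipd[OF s0 a0, of "i - 1"] by simp
      also have "\<dots> \<le> L * \<delta>" using cs sb ac L0 by (intro mult_left_mono) auto
      finally have vs1: "v s (i - 1) \<le> p / 2" using h1 Ld by simp
      have d1: "0 \<le> v s (i - 1) - v s i" using diffnn[OF s0, of "i - 1"] i1 by simp
      have "lam * (v s (i - 1) - v s i) \<le> 1 * (v s (i - 1) - v s i)"
        using d1 assms(2) by (intro mult_right_mono) auto
      also have "\<dots> \<le> v s (i - 1)" using vnn[OF s0, of i] by simp
      finally have t1: "lam * (v s (i - 1) - v s i) \<le> p / 2" using vs1 by simp
      have t2: "0 \<le> (1 - p) * (v s i - v s (i + 1))" using diffnn[OF s0, of i] assms(4) by simp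
      have "D0 \<le> - p / 2" using t1 t2 g by (simp add: D0_def)
      moreover have "(f has_real_derivative D0 + p / 2) (at s)"
        unfolding f_def using dv by (auto intro!: derivative_eq_intros)
      ultimately show "\<exists>D\<le>0. (f has_real_derivative D) (at s)" by (intro exI[of _ "D0 + p/2"]) auto
    qed
    then have ineq: "v (a + \<delta>) i \<le> v c i - (p / 2) * (a + \<delta> - c)" unfolding f_def by (simp add: field_simps)
    show False
    proof (cases "W = {}")
      case True
      then have "c = a" by (simp add: c_def)
      then show False using ineq h2 pos by (simp add: algebra_simps)
    next
      case False
      then have "v c i = 0" using cW by (auto simp: W_def)
      moreover have "c \<noteq> a + \<delta>" using \<open>v c i = 0\<close> pos by auto
      ultimately have "c < a + \<delta>" using ac by simp
      then have "(p/2) * (a + \<delta> - c) > 0" using assms(3) by (intro mult_pos_pos) auto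
      then show False using ineq pos \<open>v c i = 0\<close> by linarith

    qed
  qed
  show ?thesis
  proof (intro allI impI)
    fix t :: real assume t0: "t > 0"
    define n :: nat where "n = nat \<lceil>4 * L * t / p\<rceil> + 1"
    have n1: "n \<ge> 1" by (simp add: n_def)
    have nge: "4 * L * t / p \<le> real n" unfolding n_def by linarith
    define \<delta> where "\<delta> = t / real n"
    have d0: "\<delta> > 0" using t0 n1 by (simp add: \<delta>_def)
    have Ld: "L * \<delta> \<le> p / 4"
    proof -
      have "4 * L * t \<le> real n * p" using nge assms(3) by (simp add: divide_le_eq)
      then show ?thesis using n1 assms(3) by (simp add: \<delta>_def field_simps)
    qed
    define \<epsilon> where "\<epsilon> = min (p / 4) (p * \<delta> / 2)"
    have e0: "\<epsilon> > 0" using assms(3) d0 by (simp add: \<epsilon>_def)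
    obtain K where K: "\<forall>j\<ge>K. norm (v0 j - 0) < \<epsilon>" using LIMSEQ_D[OF v0lim e0] by blast
    have P: "\<forall>j\<ge>K + k. v (real k * \<delta>) j \<le> p / 4 \<and> v (real k * \<delta>) j < p * \<delta> / 2" for k
    proof (induction k)
      case 0
      show ?case using K v00 by (auto simp: \<epsilon>_def)
    next
      case (Suc k)
      show ?case
      proof (intro allI impI)
        fix j assume j: "j \<ge> K + Suc k"
        have j1: "j - 1 \<ge> K + k" "j \<ge> K + k" "j \<ge> 1" using j by auto
        have a0: "real k * \<delta> \<ge> 0" using d0 by simp
        have "v (real k * \<delta> + \<delta>) j = 0"
          using step[OF a0 d0 Ld j1(3)] Suc.IH j1(1,2) by blast
        then show "v (real (Suc k) * \<delta>) j \<le> p / 4 \<and> v (real (Suc k) * \<delta>) j < p * \<delta> / 2"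
          using assms(3) d0 by (simp add: algebra_simps)
      qed
    qed
    have tn: "t = real (n - 1) * \<delta> + \<delta>" using n1 by (simp add: \<delta>_def of_nat_diff field_simps)
    have "v t j = 0" if jj: "j \<ge> K + n" for j
    proof -
      have j1: "j - 1 \<ge> K + (n - 1)" "j \<ge> K + (n - 1)" "j \<ge> 1" using jj n1 by auto
      have a0: "real (n - 1) * \<delta> \<ge> 0" using d0 by simp
      have "v (real (n - 1) * \<delta> + \<delta>) j = 0"
        using step[OF a0 d0 Ld j1(3)] P[of "n - 1"] j1(1,2) by blast
      then show ?thesis using tn by simp
    qed
    then have "{i. v t i > 0} \<subseteq> {..K + n}"
      by (metis (mono_tags, lifting) less_irrefl mem_Collect_eq atMost_iff nat_le_linear subsetI)
    then show "bdd_above {i. v t i > 0}" by (meson bdd_above_Iic bdd_above_mono)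
  qed
qed

end
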